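(* Fix $p\in(0,1)$ and $\varepsilon\in(0,1)$. Consider oracular search among $N$ items (marked element uniformly random) by algorithms of the following ("exclusion round") class, which may depend on $p$. The algorithm proceeds in rounds $g=0,1,\ldots,r$; before round $g$, $g$ previously tested items have been excluded, and round $g$ operates on a quantum register $\mathbb{C}^{N-g}\otimes\mathbb{C}^M$ (the first factor spanned by the non-excluded items) subject to partial depolarizing noise $D_p(\varrho)=p\frac{I_d}{d}\mathrm{Tr}(\varrho)+(1-p)\varrho$ ($d$ the register dimension): it prepares $\varrho^x=T_{k_g}'\widehat{O}_xT_{k_g}D_p\cdots D_pT_1'\widehat{O}_xT_1D_p(\varrho_0)$ using $k_g$ oracle calls $\widehat{O}_x(|y\rangle\langle y'|\otimes\sigma)=(-1)^{\delta_{xy}+\delta_{xy'}}|y\rangle\langle y'|\otimes\sigma$ (arbitrary initial state and $x$-independent channels), measures a POVM to obtain a guess among the non-excluded items, verifies it with one further noiseless oracle query (storing it if correct), and otherwise excludes it. It is assumed that failure probabilities are multiplicative: the overall failure probability equals $\prod_{g=0}^r(1-p_s^{(g)})$, where $p_s^{(g)}$ is round $g$'s success probability averaged over the marked element uniformly distributed among the $N-g$ non-excluded items. The number of queries is $q_N=\sum_{g=0}^r(k_g+1)$. For each $N$ let such an algorithm find the marked element except with failure probability at most $\varepsilon$, using $q_N$ queries. Then there is a sequence $C_N=C_N(\varepsilon,p)$ with $\lim_{N\to\infty}C_N=1$ such that $$q_N\ge\frac{N}{1+\frac{8C_N}{p\log(1/\varepsilon)}}.$$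
   Context: $\log$ is the natural logarithm. Noise $D_p$ is applied once between consecutive oracle invocations as in the displayed formula; channels are completely positive trace-preserving maps. *)

theory Defs
  imports Complex_Main "Jordan_Normal_Form.Matrix"
begin

type_synonym cmat = "complex mat"

definition mtr :: "cmat \<Rightarrow> complex" where
  "mtr A = (\<Sum>i<dim_row A. A $$ (i, i))"

definition madj :: "cmat \<Rightarrow> cmat" where
  "madj A = mat (dim_col A) (dim_row A) (\<lambda>(i, j). cnj (A $$ (j, i)))"

definition msum :: "nat \<Rightarrow> nat \<Rightarrow> (nat \<Rightarrow> cmat) \<Rightarrow> cmat" where
  "msum d n F = mat d d (\<lambda>(i, j). \<Sum>y<n. F y $$ (i, j))"

definition psd :: "nat \<Rightarrow> cmat \<Rightarrow> bool" where
  "psd d A \<longleftrightarrow> A \<in> carrier_mat d d \<and> madj A = A \<and>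
     (\<forall>v \<in> carrier_vec d. 0 \<le> Re (\<Sum>i<d. cnj (v $ i) * (A *\<^sub>v v) $ i))"

definition density :: "nat \<Rightarrow> cmat \<Rightarrow> bool" where
  "density d \<rho> \<longleftrightarrow> psd d \<rho> \<and> mtr \<rho> = 1"

definition cptp :: "nat \<Rightarrow> (cmat \<Rightarrow> cmat) \<Rightarrow> bool" where
  "cptp d T \<longleftrightarrow> (\<exists>(m::nat) (K::nat \<Rightarrow> cmat).
      (\<forall>i<m. K i \<in> carrier_mat d d) \<and>
      msum d m (\<lambda>i. madj (K i) * K i) = 1\<^sub>m d \<and>
      (\<forall>\<rho> \<in> carrier_mat d d. T \<rho> = msum d m (\<lambda>i. K i * \<rho> * madj (K i))))"

definition povm :: "nat \<Rightarrow> nat \<Rightarrow> (nat \<Rightarrow> cmat) \<Rightarrow> bool" where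
  "povm d n E \<longleftrightarrow> (\<forall>y<n. psd d (E y)) \<and> msum d n E = 1\<^sub>m d"

definition depol :: "real \<Rightarrow> nat \<Rightarrow> cmat \<Rightarrow> cmat" where
  "depol p d \<rho> = (complex_of_real p * mtr \<rho> / of_nat d) \<cdot>\<^sub>m 1\<^sub>m d
                  + complex_of_real (1 - p) \<cdot>\<^sub>m \<rho>"

text \<open>Query channel on C^n \<otimes> C^M (basis |y>|m> has index y*M+m):
  |y><y'| \<otimes> sigma \<mapsto> (-1)^(\<delta>_xy + \<delta>_xy') |y><y'| \<otimes> sigma.\<close>
definition query_op :: "nat \<Rightarrow> nat \<Rightarrow> nat \<Rightarrow> cmat \<Rightarrow> cmat" where
  "query_op n M x \<rho> = mat (n * M) (n * M)
     (\<lambda>(i, j). (if i div M = x then -1 else 1) * (if j div M = x then -1 else 1) * \<rho> $$ (i, j))"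

text \<open>One round: k queries, initial state, channels T_i, T'_i (i = 1..k),
  and a POVM E with one outcome per non-excluded item.\<close>
record round =
  rk :: nat
  rinit :: cmat
  rT :: "nat \<Rightarrow> cmat \<Rightarrow> cmat"
  rT' :: "nat \<Rightarrow> cmat \<Rightarrow> cmat"
  rE :: "nat \<Rightarrow> cmat"

fun evolve :: "real \<Rightarrow> nat \<Rightarrow> nat \<Rightarrow> round \<Rightarrow> nat \<Rightarrow> nat \<Rightarrow> cmat \<Rightarrow> cmat" where
  "evolve p n M R x 0 \<rho> = \<rho>"
| "evolve p n M R x (Suc i) \<rho> =
     rT' R (Suc i) (query_op n M x (rT R (Suc i) (depol p (n * M) (evolve p n M R x i \<rho>))))"

definition round_state :: "real \<Rightarrow> nat \<Rightarrow> nat \<Rightarrow> round \<Rightarrow> nat \<Rightarrow> cmat" where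
  "round_state p n M R x = evolve p n M R x (rk R) (rinit R)"

definition valid_round :: "nat \<Rightarrow> nat \<Rightarrow> round \<Rightarrow> bool" where
  "valid_round n M R \<longleftrightarrow> density (n * M) (rinit R) \<and>
     (\<forall>i \<in> {1..rk R}. cptp (n * M) (rT R i) \<and> cptp (n * M) (rT' R i)) \<and>
     povm (n * M) n (rE R)"

definition round_success :: "real \<Rightarrow> nat \<Rightarrow> nat \<Rightarrow> round \<Rightarrow> real" where
  "round_success p n M R = (1 / real n) * (\<Sum>x<n. Re (mtr (rE R x * round_state p n M R x)))"

record alg =
  arounds :: nat
  aM :: nat
  around :: "nat \<Rightarrow> round"

definition valid_alg :: "nat \<Rightarrow> alg \<Rightarrow> bool" where
  "valid_alg N A \<longleftrightarrow> arounds A < N \<and> 1 \<le> aM A \<and>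
     (\<forall>g \<le> arounds A. valid_round (N - g) (aM A) (around A g))"

definition failure_prob :: "real \<Rightarrow> nat \<Rightarrow> alg \<Rightarrow> real" where
  "failure_prob p N A = (\<Prod>g \<le> arounds A. 1 - round_success p (N - g) (aM A) (around A g))"

definition queries :: "alg \<Rightarrow> nat" where
  "queries A = (\<Sum>g \<le> arounds A. rk (around A g) + 1)"

end

theory Submission
  imports Defs
begin


definition bf :: "nat \<Rightarrow> cmat \<Rightarrow> (nat \<Rightarrow> complex) \<Rightarrow> (nat \<Rightarrow> complex) \<Rightarrow> complex" where
  "bf d A u v = (\<Sum>i<d. \<Sum>j<d. cnj (u i) * A $$ (i,j) * v j)"

definition nrm :: "nat \<Rightarrow> (nat \<Rightarrow> complex) \<Rightarrow> real" where
  "nrm d u = (\<Sum>i<d. (cmod (u i))^2)"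

definition mv :: "nat \<Rightarrow> cmat \<Rightarrow> (nat \<Rightarrow> complex) \<Rightarrow> nat \<Rightarrow> complex" where
  "mv d A u = (\<lambda>i. \<Sum>j<d. A $$ (i,j) * u j)"

definition stm :: "nat \<Rightarrow> (nat \<Rightarrow> complex) list \<Rightarrow> cmat" where
  "stm d L = mat d d (\<lambda>(i,j). \<Sum>u\<leftarrow>L. u i * cnj (u j))"

lemma sl_concat: "(\<Sum>u\<leftarrow>concat xss. f u) = (\<Sum>xs\<leftarrow>xss. \<Sum>u\<leftarrow>xs. f u)"
  by (induct xss) auto

lemma sl_upt: "(\<Sum>a\<leftarrow>[0..<m]. f a) = (\<Sum>a<m. f a)"
  by (simp add: interv_sum_list_conv_sum_set_nat atLeast0LessThan)

lemma sl_sum: "(\<Sum>u\<leftarrow>L. \<Sum>k\<in>A. f u k) = (\<Sum>k\<in>A. \<Sum>u\<leftarrow>L. f u k)"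
  by (induct L) (auto simp: sum.distrib)

lemma sl_cmult: "(\<Sum>u\<leftarrow>L. c * f u) = (c::'a::comm_ring) * (\<Sum>u\<leftarrow>L. f u)"
  by (induct L) (auto simp: algebra_simps)

lemma sl_multc: "(\<Sum>u\<leftarrow>L. f u * c) = (\<Sum>u\<leftarrow>L. f u) * (c::'a::comm_ring)"
  by (induct L) (auto simp: algebra_simps)

lemma sl_distl: "(c::'a::comm_ring) * (\<Sum>u\<leftarrow>L. f u) = (\<Sum>u\<leftarrow>L. c * f u)"
  by (induct L) (auto simp: algebra_simps)

lemma sl_distr: "(\<Sum>u\<leftarrow>L. f u) * (c::'a::comm_ring) = (\<Sum>u\<leftarrow>L. f u * c)"
  by (induct L) (auto simp: algebra_simps)

lemma sl_neg: "- (\<Sum>u\<leftarrow>L. f u) = (\<Sum>u\<leftarrow>L. - (f u::'a::ab_group_add))"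
  by (induct L) (auto simp: algebra_simps)

lemma sl_cnj: "cnj (\<Sum>u\<leftarrow>L. f u) = (\<Sum>u\<leftarrow>L. cnj (f u))"
  by (induct L) auto

lemma sl_re: "Re (\<Sum>u\<leftarrow>L. f u) = (\<Sum>u\<leftarrow>L. Re (f u))"
  by (induct L) auto

lemma sl_ofreal: "complex_of_real (\<Sum>u\<leftarrow>L. f u) = (\<Sum>u\<leftarrow>L. complex_of_real (f u))"
  by (induct L) auto

lemma sl_mono: "(\<And>u. u \<in> set L \<Longrightarrow> f u \<le> g u) \<Longrightarrow> (\<Sum>u\<leftarrow>L. f u) \<le> (\<Sum>u\<leftarrow>L. (g u::real))"
  by (induct L) (auto intro: add_mono)

lemma sl_add: "(\<Sum>u\<leftarrow>L. f u + g u) = (\<Sum>u\<leftarrow>L. f u) + (\<Sum>u\<leftarrow>L. (g u::'a::comm_monoid_add))"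
  by (induct L) (auto simp: algebra_simps)

lemma multmat_idx: "A \<in> carrier_mat d d \<Longrightarrow> B \<in> carrier_mat d d \<Longrightarrow> i < d \<Longrightarrow> j < d \<Longrightarrow>
   (A * B) $$ (i,j) = (\<Sum>k<d. A $$ (i,k) * B $$ (k,j))"
  by (simp add: scalar_prod_def atLeast0LessThan)

lemma madj_carrier[simp]: "A \<in> carrier_mat d d \<Longrightarrow> madj A \<in> carrier_mat d d"
  by (simp add: madj_def)

lemma madj_dims[simp]: "dim_row (madj A) = dim_col A" "dim_col (madj A) = dim_row A"
  by (simp_all add: madj_def)

lemma madj_idx: "A \<in> carrier_mat d d \<Longrightarrow> i < d \<Longrightarrow> j < d \<Longrightarrow> madj A $$ (i,j) = cnj (A $$ (j,i))"
  by (simp add: madj_def)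

lemma sum4_swap: "(\<Sum>i\<in>A. \<Sum>j\<in>B. \<Sum>k\<in>C. \<Sum>l\<in>D. f i j k l) = (\<Sum>k\<in>C. \<Sum>l\<in>D. \<Sum>j\<in>B. \<Sum>i\<in>A. f i j k l)"
proof -
  have "(\<Sum>i\<in>A. \<Sum>j\<in>B. \<Sum>k\<in>C. \<Sum>l\<in>D. f i j k l) = (\<Sum>i\<in>A. \<Sum>k\<in>C. \<Sum>j\<in>B. \<Sum>l\<in>D. f i j k l)"
    by (rule sum.cong[OF refl], rule sum.swap)
  also have "\<dots> = (\<Sum>k\<in>C. \<Sum>i\<in>A. \<Sum>j\<in>B. \<Sum>l\<in>D. f i j k l)" by (rule sum.swap)
  also have "\<dots> = (\<Sum>k\<in>C. \<Sum>i\<in>A. \<Sum>l\<in>D. \<Sum>j\<in>B. f i j k l)"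
    by (rule sum.cong[OF refl], rule sum.cong[OF refl], rule sum.swap)
  also have "\<dots> = (\<Sum>k\<in>C. \<Sum>l\<in>D. \<Sum>i\<in>A. \<Sum>j\<in>B. f i j k l)"
    by (rule sum.cong[OF refl], rule sum.swap)
  also have "\<dots> = (\<Sum>k\<in>C. \<Sum>l\<in>D. \<Sum>j\<in>B. \<Sum>i\<in>A. f i j k l)"
    by (rule sum.cong[OF refl], rule sum.cong[OF refl], rule sum.swap)
  finally show ?thesis .
qed

lemma bf_one: "bf d (1\<^sub>m d) u v = (\<Sum>i<d. cnj (u i) * v i)"
  unfolding bf_def
proof (rule sum.cong[OF refl])
  fix i assume i: "i \<in> {..<d}"
  have "(\<Sum>j<d. cnj (u i) * 1\<^sub>m d $$ (i, j) * v j) = (\<Sum>j<d. if j = i then cnj (u i) * v i else 0)"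
    using i by (intro sum.cong) auto
  also have "\<dots> = cnj (u i) * v i" using i by simp
  finally show "(\<Sum>j<d. cnj (u i) * 1\<^sub>m d $$ (i, j) * v j) = cnj (u i) * v i" .
qed

lemma nrm_bf: "complex_of_real (nrm d u) = bf d (1\<^sub>m d) u u"
proof -
  have "complex_of_real (nrm d u) = (\<Sum>i<d. complex_of_real ((cmod (u i))^2))"
    by (simp only: nrm_def of_real_sum)
  also have "\<dots> = (\<Sum>i<d. u i * cnj (u i))" by (simp only: complex_norm_square)
  finally show ?thesis unfolding bf_one by (simp add: mult.commute)
qed

lemma sum4_swap2: "(\<Sum>i\<in>A. \<Sum>j\<in>B. \<Sum>l\<in>D. \<Sum>k\<in>C. f i j k l) = (\<Sum>k\<in>C. \<Sum>l\<in>D. \<Sum>j\<in>B. \<Sum>i\<in>A. f i j k l)"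
proof -
  have "(\<Sum>i\<in>A. \<Sum>j\<in>B. \<Sum>l\<in>D. \<Sum>k\<in>C. f i j k l) = (\<Sum>i\<in>A. \<Sum>j\<in>B. \<Sum>k\<in>C. \<Sum>l\<in>D. f i j k l)"
    by (rule sum.cong[OF refl], rule sum.cong[OF refl], rule sum.swap)
  then show ?thesis using sum4_swap by metis
qed

lemma adj_mid_idx:
  assumes K: "K \<in> carrier_mat d d" and B: "B \<in> carrier_mat d d" and x: "x < d" and y: "y < d"
  shows "(madj K * B * K) $$ (x,y) = (\<Sum>j<d. \<Sum>i<d. cnj (K $$ (i,x)) * B $$ (i,j) * K $$ (j,y))"
proof -
  have c: "madj K * B \<in> carrier_mat d d" using K B by (metis madj_carrier mult_carrier_mat)
  have "(madj K * B * K) $$ (x,y) = (\<Sum>k<d. (madj K * B) $$ (x, k) * K $$ (k, y))"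
    by (rule multmat_idx[OF c K x y])
  also have "\<dots> = (\<Sum>k<d. (\<Sum>i<d. cnj (K $$ (i,x)) * B $$ (i,k)) * K $$ (k, y))"
  proof (intro sum.cong refl)
    fix k assume "k \<in> {..<d}"
    then have "(madj K * B) $$ (x, k) = (\<Sum>i<d. madj K $$ (x,i) * B $$ (i,k))"
      using K B x by (intro multmat_idx) auto
    also have "\<dots> = (\<Sum>i<d. cnj (K $$ (i,x)) * B $$ (i,k))"
      using K x by (intro sum.cong refl) (simp add: madj_idx)
    finally show "(madj K * B) $$ (x, k) * K $$ (k, y) = (\<Sum>i<d. cnj (K $$ (i,x)) * B $$ (i,k)) * K $$ (k, y)"
      by simp
  qed
  finally show ?thesis by (simp add: sum_distrib_right)
qed

lemma bf_mv:
  assumes K: "K \<in> carrier_mat d d" and B: "B \<in> carrier_mat d d"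
  shows "bf d B (mv d K u) (mv d K v) = bf d (madj K * B * K) u v"
proof -
  have "bf d B (mv d K u) (mv d K v) =
     (\<Sum>i<d. \<Sum>j<d. \<Sum>l<d. \<Sum>k<d. cnj (K $$ (i,k)) * cnj (u k) * B $$ (i,j) * (K $$ (j,l) * v l))"
    unfolding bf_def mv_def
    by (simp add: cnj_sum sum_distrib_left sum_distrib_right mult.assoc)
  also have "\<dots> = (\<Sum>k<d. \<Sum>l<d. \<Sum>j<d. \<Sum>i<d. cnj (K $$ (i,k)) * cnj (u k) * B $$ (i,j) * (K $$ (j,l) * v l))"
    by (rule sum4_swap2)
  also have "\<dots> = bf d (madj K * B * K) u v"
    unfolding bf_def
    using K B
    by (auto intro!: sum.cong simp del: index_mult_mat simp: adj_mid_idx sum_distrib_left sum_distrib_right mult_ac)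
  finally show ?thesis .
qed

lemma bf_msum: "(\<Sum>a<m. bf d (X a) u v) = bf d (msum d m X) u v"
proof -
  have "(\<Sum>a<m. bf d (X a) u v) = (\<Sum>a<m. \<Sum>i<d. \<Sum>j<d. cnj (u i) * X a $$ (i,j) * v j)"
    by (simp add: bf_def)
  also have "\<dots> = (\<Sum>i<d. \<Sum>a<m. \<Sum>j<d. cnj (u i) * X a $$ (i,j) * v j)" by (rule sum.swap)
  also have "\<dots> = (\<Sum>i<d. \<Sum>j<d. \<Sum>a<m. cnj (u i) * X a $$ (i,j) * v j)"
    by (rule sum.cong[OF refl], rule sum.swap)
  also have "\<dots> = bf d (msum d m X) u v"
    unfolding bf_def msum_def by (auto intro!: sum.cong simp: sum_distrib_left sum_distrib_right)
  finally show ?thesis .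
qed

definition kraus :: "nat \<Rightarrow> nat \<Rightarrow> (nat \<Rightarrow> cmat) \<Rightarrow> bool" where
  "kraus d m K \<longleftrightarrow> (\<forall>i<m. K i \<in> carrier_mat d d) \<and> msum d m (\<lambda>i. madj (K i) * K i) = 1\<^sub>m d"

lemma kraus_bf:
  assumes "kraus d m K"
  shows "(\<Sum>a<m. bf d (1\<^sub>m d) (mv d (K a) u) (mv d (K a) v)) = bf d (1\<^sub>m d) u v"
proof -
  have "(\<Sum>a<m. bf d (1\<^sub>m d) (mv d (K a) u) (mv d (K a) v)) = (\<Sum>a<m. bf d (madj (K a) * K a) u v)"
  proof (intro sum.cong refl)
    fix a assume "a \<in> {..<m}"
    then have c: "K a \<in> carrier_mat d d" using assms by (auto simp: kraus_def)
    then have "madj (K a) * 1\<^sub>m d = madj (K a)" by (meson madj_carrier right_mult_one_mat)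
    then show "bf d (1\<^sub>m d) (mv d (K a) u) (mv d (K a) v) = bf d (madj (K a) * K a) u v"
      using c by (simp add: bf_mv)
  qed
  also have "\<dots> = bf d (1\<^sub>m d) u v" using assms by (simp add: bf_msum kraus_def)
  finally show ?thesis .
qed

lemma kraus_nrm:
  assumes "kraus d m K"
  shows "(\<Sum>a<m. nrm d (mv d (K a) u)) = nrm d u"
proof -
  have "complex_of_real (\<Sum>a<m. nrm d (mv d (K a) u)) = complex_of_real (nrm d u)"
    using kraus_bf[OF assms, of u u] by (simp add: nrm_bf)
  then show ?thesis by (simp only: of_real_eq_iff)
qed

lemma psd_carrier: "psd d A \<Longrightarrow> A \<in> carrier_mat d d" by (simp add: psd_def)

lemma psd_herm: "psd d A \<Longrightarrow> i < d \<Longrightarrow> j < d \<Longrightarrow> A $$ (i,j) = cnj (A $$ (j,i))"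
proof -
  assume a: "psd d A" "i < d" "j < d"
  then have "madj A $$ (i,j) = A $$ (i,j)" by (simp add: psd_def)
  then show ?thesis using madj_idx[OF psd_carrier[OF a(1)] a(2) a(3)] by simp
qed

lemma psd_bf_nonneg:
  assumes "psd d A"
  shows "0 \<le> Re (bf d A u u)"
proof -
  have c: "A \<in> carrier_mat d d" using assms psd_carrier by auto
  have v: "vec d u \<in> carrier_vec d" by simp
  have "0 \<le> Re (\<Sum>i<d. cnj (vec d u $ i) * (A *\<^sub>v vec d u) $ i)"
    using assms v unfolding psd_def by blast
  also have "(\<Sum>i<d. cnj (vec d u $ i) * (A *\<^sub>v vec d u) $ i) = bf d A u u"
    unfolding bf_def 
  proof (intro sum.cong refl)
    fix i assume i: "i \<in> {..<d}"
    have "(A *\<^sub>v vec d u) $ i = (\<Sum>j<d. A $$ (i,j) * u j)"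
      using c i by (simp add: scalar_prod_def atLeast0LessThan)
    then show "cnj (vec d u $ i) * (A *\<^sub>v vec d u) $ i = (\<Sum>j<d. cnj (u i) * A $$ (i, j) * u j)"
      using i by (simp add: sum_distrib_left mult.assoc)
  qed
  finally show ?thesis .
qed

lemma bf_herm: assumes "psd d A" shows "bf d A v u = cnj (bf d A u v)"
proof -
  have "cnj (bf d A u v) = (\<Sum>i<d. \<Sum>j<d. u i * cnj (A $$ (i,j)) * cnj (v j))"
    unfolding bf_def by (simp add: cnj_sum)
  also have "\<dots> = (\<Sum>j<d. \<Sum>i<d. u i * cnj (A $$ (i,j)) * cnj (v j))" by (rule sum.swap)
  also have "\<dots> = bf d A v u" unfolding bf_def
    by (intro sum.cong refl) (simp add: psd_herm[OF assms, symmetric] mult_ac)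
  finally show ?thesis by simp
qed

lemma bf_add_l: "bf d A (\<lambda>i. u i + w i) v = bf d A u v + bf d A w v"
  unfolding bf_def by (simp add: algebra_simps sum.distrib)

lemma bf_add_r: "bf d A v (\<lambda>i. u i + w i) = bf d A v u + bf d A v w"
  unfolding bf_def by (simp add: algebra_simps sum.distrib)

lemma bf_diff_l: "bf d A (\<lambda>i. u i - w i) v = bf d A u v - bf d A w v"
  unfolding bf_def by (simp add: algebra_simps sum_subtractf)

lemma bf_diff_r: "bf d A v (\<lambda>i. u i - w i) = bf d A v u - bf d A v w"
  unfolding bf_def by (simp add: algebra_simps sum_subtractf)

lemma bf_scale_l: "bf d A (\<lambda>i. c * u i) v = cnj c * bf d A u v"
  unfolding bf_def by (simp add: algebra_simps sum_distrib_left)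

lemma bf_scale_r: "bf d A v (\<lambda>i. c * u i) = c * bf d A v u"
  unfolding bf_def by (simp add: algebra_simps sum_distrib_left)

lemma bf_split:
  assumes "psd d A" "t > 0"
  shows "Re (bf d A (\<lambda>i. u i + w i) (\<lambda>i. u i + w i)) \<le> (1 + t) * Re (bf d A u u) + (1 + 1/t) * Re (bf d A w w)"
proof -
  let ?z = "\<lambda>i. complex_of_real t * u i - w i"
  have h: "Re (bf d A w u) = Re (bf d A u w)" using bf_herm[OF assms(1), of w u] by simp
  have "0 \<le> Re (bf d A ?z ?z)" by (rule psd_bf_nonneg[OF assms(1)])
  also have "bf d A ?z ?z = of_real t * of_real t * bf d A u u - of_real t * bf d A u w - of_real t * bf d A w u + bf d A w w"
    by (simp add: bf_diff_l bf_diff_r bf_scale_l bf_scale_r algebra_simps)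
  then have "Re (bf d A ?z ?z) = t * t * Re (bf d A u u) - 2 * t * Re (bf d A u w) + Re (bf d A w w)"
    using h by simp
  finally have 1: "0 \<le> t * t * Re (bf d A u u) - 2 * t * Re (bf d A u w) + Re (bf d A w w)" .
  have "Re (bf d A (\<lambda>i. u i + w i) (\<lambda>i. u i + w i)) = Re (bf d A u u) + 2 * Re (bf d A u w) + Re (bf d A w w)"
    using h by (simp add: bf_add_l bf_add_r)
  also have "\<dots> \<le> (1 + t) * Re (bf d A u u) + (1 + 1/t) * Re (bf d A w w)"
  proof -
    have "2 * Re (bf d A u w) \<le> t * Re (bf d A u u) + Re (bf d A w w) / t"
      using 1 assms(2) by (simp add: field_simps)
    then show ?thesis by (simp add: algebra_simps)
  qed
  finally show ?thesis .
qed



lemma povm_sum: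
  assumes "povm d n E"
  shows "(\<Sum>y<n. Re (bf d (E y) u u)) = nrm d u"
proof -
  have "(\<Sum>y<n. bf d (E y) u u) = bf d (msum d n E) u u" by (rule bf_msum)
  also have "\<dots> = complex_of_real (nrm d u)" using assms by (simp add: povm_def nrm_bf)
  finally have "Re (\<Sum>y<n. bf d (E y) u u) = nrm d u" by simp
  then show ?thesis by simp
qed

lemma povm_le:
  assumes "povm d n E" "x < n"
  shows "Re (bf d (E x) u u) \<le> nrm d u"
proof -
  have "Re (bf d (E x) u u) \<le> (\<Sum>y<n. Re (bf d (E y) u u))"
    using assms by (intro member_le_sum) (auto simp: povm_def psd_bf_nonneg)
  then show ?thesis using povm_sum[OF assms(1)] by simp
qed

lemma stm_carrier[simp]: "stm d L \<in> carrier_mat d d" by (simp add: stm_def)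
lemma stm_dims[simp]: "dim_row (stm d L) = d" "dim_col (stm d L) = d" by (simp_all add: stm_def)

lemma stm_idx: "i < d \<Longrightarrow> j < d \<Longrightarrow> stm d L $$ (i,j) = (\<Sum>u\<leftarrow>L. u i * cnj (u j))"
  by (simp add: stm_def)

lemma stm_kraus:
  assumes K: "K \<in> carrier_mat d d"
  shows "K * stm d L * madj K = stm d (map (mv d K) L)"
proof (rule eq_matI)
  fix i j assume i: "i < dim_row (stm d (map (mv d K) L))" and j: "j < dim_col (stm d (map (mv d K) L))"
  then have i: "i < d" and j: "j < d" by auto
  have c1: "K * stm d L \<in> carrier_mat d d" using K by (metis stm_carrier mult_carrier_mat)
  have "(K * stm d L * madj K) $$ (i,j) = (\<Sum>l<d. (K * stm d L) $$ (i,l) * madj K $$ (l,j))"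
    using c1 K i j by (intro multmat_idx) auto
  also have "\<dots> = (\<Sum>l<d. (\<Sum>k<d. K $$ (i,k) * (\<Sum>u\<leftarrow>L. u k * cnj (u l))) * cnj (K $$ (j,l)))"
  proof (intro sum.cong refl)
    fix l assume l: "l \<in> {..<d}"
    have "(K * stm d L) $$ (i,l) = (\<Sum>k<d. K $$ (i,k) * stm d L $$ (k,l))"
      using K i l by (intro multmat_idx) auto
    also have "\<dots> = (\<Sum>k<d. K $$ (i,k) * (\<Sum>u\<leftarrow>L. u k * cnj (u l)))"
      using l by (intro sum.cong refl) (auto simp: stm_idx)
    finally show "(K * stm d L) $$ (i,l) * madj K $$ (l,j) = (\<Sum>k<d. K $$ (i,k) * (\<Sum>u\<leftarrow>L. u k * cnj (u l))) * cnj (K $$ (j,l))"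
      using K l j by (simp add: madj_idx)
  qed
  also have "\<dots> = (\<Sum>l<d. \<Sum>k<d. \<Sum>u\<leftarrow>L. K $$ (i,k) * u k * cnj (u l) * cnj (K $$ (j,l)))"
    by (simp add: sum_distrib_right sum_distrib_left sl_distl sl_distr mult.assoc)
  also have "\<dots> = (\<Sum>u\<leftarrow>L. \<Sum>l<d. \<Sum>k<d. K $$ (i,k) * u k * cnj (u l) * cnj (K $$ (j,l)))"
    by (simp add: sl_sum)
  also have "\<dots> = stm d (map (mv d K) L) $$ (i,j)"
    using i j by (simp add: stm_idx mv_def o_def cnj_sum sum_distrib_right sum_distrib_left mult_ac)
  finally show "(K * stm d L * madj K) $$ (i,j) = stm d (map (mv d K) L) $$ (i,j)" .
qed (use K madj_carrier[OF K] in auto)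

lemma msum_stm: "msum d m (\<lambda>a. stm d (f a)) = stm d (concat (map f [0..<m]))"
  by (rule eq_matI) (auto simp: msum_def stm_idx sl_concat o_def sl_upt)

lemma mtr_stm: "mtr (stm d L) = complex_of_real (\<Sum>u\<leftarrow>L. nrm d u)"
proof -
  have "mtr (stm d L) = (\<Sum>i<d. \<Sum>u\<leftarrow>L. u i * cnj (u i))"
    by (simp add: mtr_def stm_idx)
  also have "\<dots> = (\<Sum>u\<leftarrow>L. \<Sum>i<d. u i * cnj (u i))" by (simp add: sl_sum)
  also have "\<dots> = (\<Sum>u\<leftarrow>L. complex_of_real (nrm d u))"
    by (simp add: nrm_bf bf_one mult.commute)
  finally show ?thesis by (simp add: sl_ofreal)
qed

lemma mtr_E_stm:
  assumes E: "E \<in> carrier_mat d d"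
  shows "mtr (E * stm d L) = (\<Sum>u\<leftarrow>L. bf d E u u)"
proof -
  have "mtr (E * stm d L) = (\<Sum>i<d. \<Sum>k<d. E $$ (i,k) * (\<Sum>u\<leftarrow>L. u k * cnj (u i)))"
    unfolding mtr_def using E
    by (intro sum.cong) (auto simp del: index_mult_mat simp: multmat_idx[OF E stm_carrier] stm_idx carrier_matD index_mult_mat(2))
  also have "\<dots> = (\<Sum>i<d. \<Sum>k<d. \<Sum>u\<leftarrow>L. cnj (u i) * E $$ (i,k) * u k)"
    by (simp add: sum_distrib_left sl_distl mult_ac)
  also have "\<dots> = (\<Sum>u\<leftarrow>L. \<Sum>i<d. \<Sum>k<d. cnj (u i) * E $$ (i,k) * u k)"
    by (simp add: sl_sum)
  finally show ?thesis by (simp add: bf_def)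
qed

definition ov :: "nat \<Rightarrow> nat \<Rightarrow> (nat \<Rightarrow> complex) \<Rightarrow> nat \<Rightarrow> complex" where
  "ov M x u = (\<lambda>i. (if i div M = x then -1 else 1) * u i)"

lemma query_stm: "query_op n M x (stm (n*M) L) = stm (n*M) (map (ov M x) L)"
  by (rule eq_matI) (auto simp: query_op_def stm_idx ov_def o_def sl_neg)

lemma stm_append: "stm d (L1 @ L2) = stm d L1 + stm d L2"
  by (rule eq_matI) (auto simp: stm_idx)

definition sc :: "real \<Rightarrow> (nat \<Rightarrow> complex) \<Rightarrow> nat \<Rightarrow> complex" where
  "sc c u = (\<lambda>i. complex_of_real c * u i)"

definition ev :: "real \<Rightarrow> nat \<Rightarrow> nat \<Rightarrow> complex" where
  "ev r l = (\<lambda>i. if i = l then complex_of_real r else 0)"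

lemma stm_sc: "stm d (map (sc c) L) = complex_of_real (c^2) \<cdot>\<^sub>m stm d L"
  by (rule eq_matI) (auto simp: stm_idx sc_def o_def sl_distl power2_eq_square mult_ac)

lemma stm_ev: "stm d (map (ev r) [0..<d]) = complex_of_real (r^2) \<cdot>\<^sub>m 1\<^sub>m d"
proof (rule eq_matI)
  fix i j assume "i < dim_row (complex_of_real (r^2) \<cdot>\<^sub>m 1\<^sub>m d)" "j < dim_col (complex_of_real (r^2) \<cdot>\<^sub>m 1\<^sub>m d)"
  then have i: "i < d" and j: "j < d" by auto
  have "stm d (map (ev r) [0..<d]) $$ (i,j) = (\<Sum>l<d. ev r l i * cnj (ev r l j))"
    using i j by (simp add: stm_idx o_def sl_upt)
  also have "\<dots> = (\<Sum>l<d. if l = i then (if i = j then complex_of_real (r^2) else 0) else 0)"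
    by (intro sum.cong refl) (auto simp: ev_def power2_eq_square)
  also have "\<dots> = (complex_of_real (r^2) \<cdot>\<^sub>m 1\<^sub>m d) $$ (i,j)" using i j by simp
  finally show "stm d (map (ev r) [0..<d]) $$ (i,j) = (complex_of_real (r^2) \<cdot>\<^sub>m 1\<^sub>m d) $$ (i,j)" .
qed auto

lemma depol_stm:
  assumes "mtr (stm d L) = 1" "0 \<le> p" "p \<le> 1"
  shows "depol p d (stm d L) = stm d (map (sc (sqrt (1 - p))) L @ map (ev (sqrt (p / d))) [0..<d])"
proof -
  have "depol p d (stm d L) = (complex_of_real p / of_nat d) \<cdot>\<^sub>m 1\<^sub>m d + complex_of_real (1 - p) \<cdot>\<^sub>m stm d L"
    using assms by (simp add: depol_def)
  moreover have "stm d (map (sc (sqrt (1 - p))) L @ map (ev (sqrt (p / d))) [0..<d])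
     = complex_of_real (1 - p) \<cdot>\<^sub>m stm d L + complex_of_real (p / d) \<cdot>\<^sub>m 1\<^sub>m d"
    using assms by (simp add: stm_append stm_sc stm_ev)
  ultimately show ?thesis
    by (simp add: comm_add_mat[of _ d d])
qed



type_synonym pl = "((nat \<Rightarrow> complex) \<times> (nat \<Rightarrow> complex)) list"

definition kr1 :: "nat \<Rightarrow> nat \<Rightarrow> (nat \<Rightarrow> cmat) \<Rightarrow> (nat \<Rightarrow> complex) list \<Rightarrow> (nat \<Rightarrow> complex) list" where
  "kr1 d m K L = concat (map (\<lambda>a. map (mv d (K a)) L) [0..<m])"

definition krp :: "nat \<Rightarrow> nat \<Rightarrow> (nat \<Rightarrow> cmat) \<Rightarrow> pl \<Rightarrow> pl" where
  "krp d m K P = concat (map (\<lambda>a. map (\<lambda>(u,w). (mv d (K a) u, mv d (K a) w)) P) [0..<m])"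

definition qrp :: "nat \<Rightarrow> nat \<Rightarrow> pl \<Rightarrow> pl" where
  "qrp M x P = map (\<lambda>(u,w). (ov M x u, w)) P"

definition nz1 :: "real \<Rightarrow> nat \<Rightarrow> (nat \<Rightarrow> complex) list \<Rightarrow> (nat \<Rightarrow> complex) list" where
  "nz1 p d L = map (sc (sqrt (1-p))) L @ map (ev (sqrt (p/d))) [0..<d]"

definition nzp :: "real \<Rightarrow> nat \<Rightarrow> pl \<Rightarrow> pl" where
  "nzp p d P = map (\<lambda>(u,w). (sc (sqrt (1-p)) u, sc (sqrt (1-p)) w)) P
      @ map (\<lambda>l. (ev (sqrt (p/d)) l, ev (sqrt (p/d)) l)) [0..<d]"

lemma fst_krp: "map fst (krp d m K P) = kr1 d m K (map fst P)"
  by (simp add: krp_def kr1_def map_concat o_def case_prod_beta)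
lemma snd_krp: "map snd (krp d m K P) = kr1 d m K (map snd P)"
  by (simp add: krp_def kr1_def map_concat o_def case_prod_beta)
lemma fst_qrp: "map fst (qrp M x P) = map (ov M x) (map fst P)"
  by (simp add: qrp_def o_def case_prod_beta)
lemma snd_qrp: "map snd (qrp M x P) = map snd P"
  by (simp add: qrp_def o_def case_prod_beta)
lemma fst_nzp: "map fst (nzp p d P) = nz1 p d (map fst P)"
  by (simp add: nzp_def nz1_def o_def case_prod_beta)
lemma snd_nzp: "map snd (nzp p d P) = nz1 p d (map snd P)"
  by (simp add: nzp_def nz1_def o_def case_prod_beta)

lemma msum_cong: "(\<And>a. a < m \<Longrightarrow> F a = G a) \<Longrightarrow> msum d m F = msum d m G"
  unfolding msum_def by (intro cong_mat refl) auto

lemma stm_kr1: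
  assumes "kraus d m K"
  shows "stm d (kr1 d m K L) = msum d m (\<lambda>a. K a * stm d L * madj (K a))"
proof -
  have "msum d m (\<lambda>a. K a * stm d L * madj (K a)) = msum d m (\<lambda>a. stm d (map (mv d (K a)) L))"
    using assms by (intro msum_cong) (simp add: kraus_def stm_kraus)
  then show ?thesis by (simp add: msum_stm kr1_def)
qed

lemma sum_kr1: "(\<Sum>u\<leftarrow>kr1 d m K L. f u) = (\<Sum>a<m. \<Sum>u\<leftarrow>L. f (mv d (K a) u))"
  by (simp add: kr1_def sl_concat o_def sl_upt)

lemma sum_krp: "(\<Sum>q\<leftarrow>krp d m K P. f q) = (\<Sum>a<m. \<Sum>q\<leftarrow>P. f (mv d (K a) (fst q), mv d (K a) (snd q)))"
  by (simp add: krp_def sl_concat o_def sl_upt case_prod_beta)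

lemma nrm_kr1: "kraus d m K \<Longrightarrow> (\<Sum>u\<leftarrow>kr1 d m K L. nrm d u) = (\<Sum>u\<leftarrow>L. nrm d u)"
  by (simp add: sum_kr1 sl_sum[symmetric] kraus_nrm)

lemma nrm_sc: "nrm d (sc c u) = c^2 * nrm d u"
  by (simp add: nrm_def sc_def norm_mult power_mult_distrib sum_distrib_left)

lemma nrm_ev: "l < d \<Longrightarrow> nrm d (ev r l) = r^2"
proof -
  assume l: "l < d"
  have "nrm d (ev r l) = (\<Sum>i<d. if i = l then r^2 else 0)"
    unfolding nrm_def by (intro sum.cong refl) (auto simp: ev_def)
  then show ?thesis using l by simp
qed

lemma nrm_nz1:
  assumes "0 \<le> p" "p \<le> 1" "0 < d"
  shows "(\<Sum>u\<leftarrow>nz1 p d L. nrm d u) = (1-p) * (\<Sum>u\<leftarrow>L. nrm d u) + p"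
proof -
  have "(\<Sum>u\<leftarrow>map (ev (sqrt (p/d))) [0..<d]. nrm d u) = (\<Sum>l<d. p/d)"
    using assms by (simp add: o_def sl_upt nrm_ev)
  also have "\<dots> = p" using assms by simp
  finally show ?thesis using assms
    by (simp add: nz1_def o_def nrm_sc sl_distl)
qed

definition dst :: "nat \<Rightarrow> pl \<Rightarrow> real" where
  "dst d P = (\<Sum>q\<leftarrow>P. nrm d (\<lambda>i. fst q i - snd q i))"

lemma mv_diff: "mv d K u i - mv d K w i = mv d K (\<lambda>j. u j - w j) i"
  by (simp add: mv_def algebra_simps sum_subtractf)

lemma dst_krp: "kraus d m K \<Longrightarrow> dst d (krp d m K P) = dst d P"
  by (simp add: dst_def sum_krp mv_diff sl_sum[symmetric] kraus_nrm)

lemma dst_nzp: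
  assumes "0 \<le> p" "p \<le> 1"
  shows "dst d (nzp p d P) = (1-p) * dst d P"
proof -
  have z: "nrm d (\<lambda>i. ev r l i - ev r l i) = 0" for r l by (simp add: nrm_def)
  have s: "nrm d (\<lambda>i. sc c u i - sc c w i) = c^2 * nrm d (\<lambda>i. u i - w i)" for c u w
  proof -
    have "(\<lambda>i. sc c u i - sc c w i) = sc c (\<lambda>i. u i - w i)" by (auto simp: sc_def algebra_simps)
    then show ?thesis by (simp add: nrm_sc)
  qed
  show ?thesis using assms
    by (simp add: dst_def nzp_def o_def case_prod_beta z s sl_distl, simp add: nrm_def)
qed

definition loc :: "nat \<Rightarrow> nat \<Rightarrow> nat \<Rightarrow> (nat \<Rightarrow> complex) \<Rightarrow> real" where
  "loc n M x w = (\<Sum>i<n*M. if i div M = x then (cmod (w i))^2 else 0)"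

lemma loc_sum: "(\<Sum>x<n. loc n M x w) = nrm (n*M) w"
proof -
  have "(\<Sum>x<n. loc n M x w) = (\<Sum>i<n*M. \<Sum>x<n. if i div M = x then (cmod (w i))^2 else 0)"
    unfolding loc_def by (rule sum.swap)
  also have "\<dots> = (\<Sum>i<n*M. (cmod (w i))^2)"
  proof (intro sum.cong refl)
    fix i assume "i \<in> {..<n*M}"
    then have "i div M < n" by (simp add: less_mult_imp_div_less mult.commute)
    then show "(\<Sum>x<n. if i div M = x then (cmod (w i))^2 else 0) = (cmod (w i))^2"
      by (simp add: sum.delta)
  qed
  finally show ?thesis by (simp add: nrm_def)
qed

lemma sq_split: "t > 0 \<Longrightarrow> (cmod (a + b))^2 \<le> (1+t) * (cmod a)^2 + (1 + 1/t) * (cmod b)^2"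
proof -
  assume t: "t > 0"
  have "(cmod (a+b))^2 \<le> (cmod a + cmod b)^2"
    by (simp add: norm_triangle_ineq power_mono)
  also have "\<dots> \<le> (1+t) * (cmod a)^2 + (1 + 1/t) * (cmod b)^2"
  proof -
    have "0 \<le> (t * cmod a - cmod b)^2 / t" using t by simp
    then show ?thesis using t by (simp add: field_simps power2_eq_square)
  qed
  finally show ?thesis .
qed

lemma dst_qrp:
  assumes t: "t > 0"
  shows "dst (n*M) (qrp M x P) \<le> (1+t) * dst (n*M) P + (1 + 1/t) * 4 * (\<Sum>w\<leftarrow>map snd P. loc n M x w)"
proof -
  have one: "nrm (n*M) (\<lambda>i. ov M x u i - w i) \<le> (1+t) * nrm (n*M) (\<lambda>i. u i - w i) + (1 + 1/t) * 4 * loc n M x w" for u w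
  proof -
    have "nrm (n*M) (\<lambda>i. ov M x u i - w i) \<le> (\<Sum>i<n*M. (1+t) * (cmod (u i - w i))^2 + (1 + 1/t) * (4 * (if i div M = x then (cmod (w i))^2 else 0)))"
      unfolding nrm_def
    proof (intro sum_mono)
      fix i
      have e: "ov M x u i - w i = (ov M x u i - ov M x w i) + (ov M x w i - w i)" by simp
      have "(cmod (ov M x u i - w i))^2 \<le> (1+t) * (cmod (ov M x u i - ov M x w i))^2 + (1 + 1/t) * (cmod (ov M x w i - w i))^2"
        unfolding e by (rule sq_split[OF t])
      moreover have "cmod (ov M x u i - ov M x w i) = cmod (u i - w i)"
        by (auto simp: ov_def norm_minus_commute simp flip: right_diff_distrib)
      moreover have "(cmod (ov M x w i - w i))^2 = 4 * (if i div M = x then (cmod (w i))^2 else 0)"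
        by (auto simp: ov_def power2_eq_square)
      ultimately show "(cmod (ov M x u i - w i))^2 \<le> (1+t) * (cmod (u i - w i))^2 + (1 + 1/t) * (4 * (if i div M = x then (cmod (w i))^2 else 0))"
        by simp
    qed
    also have "\<dots> = (1+t) * nrm (n*M) (\<lambda>i. u i - w i) + (1 + 1/t) * 4 * loc n M x w"
      by (simp add: nrm_def loc_def sum.distrib sum_distrib_left mult.assoc[symmetric])
    finally show ?thesis .
  qed
  have "dst (n*M) (qrp M x P) = (\<Sum>q\<leftarrow>P. nrm (n*M) (\<lambda>i. ov M x (fst q) i - snd q i))"
    by (simp add: dst_def qrp_def o_def case_prod_beta)
  also have "\<dots> \<le> (\<Sum>q\<leftarrow>P. (1+t) * nrm (n*M) (\<lambda>i. fst q i - snd q i) + (1 + 1/t) * 4 * loc n M x (snd q))"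
    by (rule sl_mono) (rule one)
  also have "\<dots> = (1+t) * dst (n*M) P + (1 + 1/t) * 4 * (\<Sum>w\<leftarrow>map snd P. loc n M x w)"
    by (simp add: sl_add dst_def sl_distl o_def)
  finally show ?thesis .
qed

lemma nrm_ov: "nrm d (ov M x u) = nrm d u"
  unfolding nrm_def ov_def by (intro sum.cong refl) (auto simp: norm_mult)



locale rctx =
  fixes p :: real and n M :: nat and R :: round
    and m :: "nat \<Rightarrow> nat" and K :: "nat \<Rightarrow> nat \<Rightarrow> cmat"
    and m' :: "nat \<Rightarrow> nat" and K' :: "nat \<Rightarrow> nat \<Rightarrow> cmat"
    and L0 :: "(nat \<Rightarrow> complex) list"
  assumes p0: "0 < p" and p1: "p < 1" and nM: "0 < n*M"
    and krT: "\<And>i. 1 \<le> i \<Longrightarrow> i \<le> rk R \<Longrightarrow> kraus (n*M) (m i) (K i)"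
    and krT': "\<And>i. 1 \<le> i \<Longrightarrow> i \<le> rk R \<Longrightarrow> kraus (n*M) (m' i) (K' i)"
    and T: "\<And>i \<rho>. 1 \<le> i \<Longrightarrow> i \<le> rk R \<Longrightarrow> \<rho> \<in> carrier_mat (n*M) (n*M) \<Longrightarrow>
              rT R i \<rho> = msum (n*M) (m i) (\<lambda>a. K i a * \<rho> * madj (K i a))"
    and T': "\<And>i \<rho>. 1 \<le> i \<Longrightarrow> i \<le> rk R \<Longrightarrow> \<rho> \<in> carrier_mat (n*M) (n*M) \<Longrightarrow>
              rT' R i \<rho> = msum (n*M) (m' i) (\<lambda>a. K' i a * \<rho> * madj (K' i a))"
    and L0: "stm (n*M) L0 = rinit R"
    and tr0: "mtr (rinit R) = 1"
begin

fun evp :: "nat \<Rightarrow> nat \<Rightarrow> pl" where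
  "evp x 0 = map (\<lambda>v. (v,v)) L0"
| "evp x (Suc i) = krp (n*M) (m' (Suc i)) (K' (Suc i))
     (qrp M x (krp (n*M) (m (Suc i)) (K (Suc i)) (nzp p (n*M) (evp x i))))"

fun evs :: "nat \<Rightarrow> (nat \<Rightarrow> complex) list" where
  "evs 0 = L0"
| "evs (Suc i) = kr1 (n*M) (m' (Suc i)) (K' (Suc i)) (kr1 (n*M) (m (Suc i)) (K (Suc i)) (nz1 p (n*M) (evs i)))"

lemma snd_evp: "map snd (evp x i) = evs i"
  by (induct i) (simp_all add: snd_krp snd_qrp snd_nzp o_def)

lemma nrm_L0: "(\<Sum>u\<leftarrow>L0. nrm (n*M) u) = 1"
proof -
  have "complex_of_real (\<Sum>u\<leftarrow>L0. nrm (n*M) u) = 1" using L0 tr0 mtr_stm[of "n*M" L0] by simp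
  then show ?thesis by (metis of_real_eq_1_iff)
qed

lemma nrm_evs: "i \<le> rk R \<Longrightarrow> (\<Sum>u\<leftarrow>evs i. nrm (n*M) u) = 1"
proof (induct i)
  case 0 then show ?case by (simp add: nrm_L0)
next
  case (Suc i)
  then show ?case using p0 p1 nM krT[of "Suc i"] krT'[of "Suc i"]
    by (simp add: nrm_kr1 nrm_nz1)
qed

lemma nrm_evp: "i \<le> rk R \<Longrightarrow> (\<Sum>u\<leftarrow>map fst (evp x i). nrm (n*M) u) = 1"
proof (induct i)
  case 0 then show ?case by (simp add: nrm_L0 o_def)
next
  case (Suc i)
  then show ?case using p0 p1 nM krT[of "Suc i"] krT'[of "Suc i"]
    by (simp add: fst_krp fst_qrp fst_nzp nrm_kr1 nrm_nz1 o_def nrm_ov)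
qed

lemma evolve_evp: "i \<le> rk R \<Longrightarrow> evolve p n M R x i (rinit R) = stm (n*M) (map fst (evp x i))"
proof (induct i)
  case 0 then show ?case by (simp add: L0 o_def)
next
  case (Suc i)
  then have ih: "evolve p n M R x i (rinit R) = stm (n*M) (map fst (evp x i))" by simp
  have tr: "mtr (stm (n*M) (map fst (evp x i))) = 1"
    using nrm_evp[of i x] Suc by (simp add: mtr_stm)
  have "depol p (n*M) (evolve p n M R x i (rinit R)) = stm (n*M) (map fst (nzp p (n*M) (evp x i)))"
    using ih tr p0 p1 by (simp add: depol_stm fst_nzp nz1_def)
  moreover have "rT R (Suc i) (stm (n*M) L) = stm (n*M) (kr1 (n*M) (m (Suc i)) (K (Suc i)) L)" for L
    using T[of "Suc i"] krT[of "Suc i"] Suc by (simp add: stm_kr1)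
  moreover have "rT' R (Suc i) (stm (n*M) L) = stm (n*M) (kr1 (n*M) (m' (Suc i)) (K' (Suc i)) L)" for L
    using T'[of "Suc i"] krT'[of "Suc i"] Suc by (simp add: stm_kr1)
  ultimately show ?case
    by (simp add: query_stm fst_krp fst_qrp)
qed

lemma dist0: "dst (n*M) (evp x 0) = 0"
  by (simp add: dst_def o_def nrm_def)

lemma Dstep:
  assumes i: "i < rk R" and t: "t > 0"
  shows "(\<Sum>x<n. dst (n*M) (evp x (Suc i))) \<le> (1+t) * (1-p) * (\<Sum>x<n. dst (n*M) (evp x i)) + 4 * (1 + 1/t)"
proof -
  let ?S = "kr1 (n*M) (m (Suc i)) (K (Suc i)) (nz1 p (n*M) (evs i))"
  have kr: "kraus (n*M) (m (Suc i)) (K (Suc i))" "kraus (n*M) (m' (Suc i)) (K' (Suc i))"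
    using krT krT' i by auto
  have one: "dst (n*M) (evp x (Suc i)) \<le> (1+t) * (1-p) * dst (n*M) (evp x i) + (1 + 1/t) * 4 * (\<Sum>w\<leftarrow>?S. loc n M x w)" for x
  proof -
    have "dst (n*M) (evp x (Suc i)) = dst (n*M) (qrp M x (krp (n*M) (m (Suc i)) (K (Suc i)) (nzp p (n*M) (evp x i))))"
      using kr by (simp add: dst_krp)
    also have "\<dots> \<le> (1+t) * dst (n*M) (krp (n*M) (m (Suc i)) (K (Suc i)) (nzp p (n*M) (evp x i)))
        + (1 + 1/t) * 4 * (\<Sum>w\<leftarrow>map snd (krp (n*M) (m (Suc i)) (K (Suc i)) (nzp p (n*M) (evp x i))). loc n M x w)"
      by (rule dst_qrp[OF t])
    also have "\<dots> = (1+t) * (1-p) * dst (n*M) (evp x i) + (1 + 1/t) * 4 * (\<Sum>w\<leftarrow>?S. loc n M x w)"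
      using kr p0 p1 by (simp add: dst_krp dst_nzp snd_krp snd_nzp snd_evp)
    finally show ?thesis .
  qed
  have "(\<Sum>x<n. dst (n*M) (evp x (Suc i))) \<le> (\<Sum>x<n. (1+t) * (1-p) * dst (n*M) (evp x i) + (1 + 1/t) * 4 * (\<Sum>w\<leftarrow>?S. loc n M x w))"
    by (rule sum_mono) (rule one)
  also have "\<dots> = (1+t) * (1-p) * (\<Sum>x<n. dst (n*M) (evp x i)) + (1 + 1/t) * 4 * (\<Sum>w\<leftarrow>?S. \<Sum>x<n. loc n M x w)"
    by (simp add: sum.distrib sum_distrib_left sl_sum)
  also have "(\<Sum>w\<leftarrow>?S. \<Sum>x<n. loc n M x w) = 1"
    using kr p0 p1 nM i nrm_evs[of i] by (simp add: loc_sum nrm_kr1 nrm_nz1)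
  finally show ?thesis by (simp add: mult.commute)
qed

lemma Dlin: "i \<le> rk R \<Longrightarrow> (\<Sum>x<n. dst (n*M) (evp x i)) \<le> 4 * i / p"
proof (induct i)
  case 0 then show ?case by (simp add: dst_def o_def nrm_def)
next
  case (Suc i)
  let ?t = "p / (1 - p)"
  have t: "?t > 0" using p0 p1 by simp
  have e1: "(1 + ?t) * (1 - p) = 1" using p1 by (simp add: field_simps)
  have e2: "4 * (1 + 1 / ?t) = 4 / p" using p0 p1 by (simp add: field_simps)
  have "(\<Sum>x<n. dst (n*M) (evp x (Suc i))) \<le> (1 + ?t) * (1-p) * (\<Sum>x<n. dst (n*M) (evp x i)) + 4 * (1 + 1 / ?t)"
    using Dstep[OF _ t, of i] Suc by simp
  also have "\<dots> \<le> 4 * i / p + 4 / p" using Suc e1 e2 by simp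
  also have "\<dots> = 4 * real (Suc i) / p" using p0 by (simp add: field_simps)
  finally show ?case .
qed

lemma Dsat: "i \<le> rk R \<Longrightarrow> (\<Sum>x<n. dst (n*M) (evp x i)) \<le> 16 / p^2"
proof (induct i)
  case 0 then show ?case by (simp add: dst_def o_def nrm_def)
next
  case (Suc i)
  let ?t = "p / (2 * (1 - p))"
  have t: "?t > 0" using p0 p1 by simp
  have e1: "(1 + ?t) * (1 - p) = 1 - p / 2" using p1 by (simp add: field_simps)
  have e2: "4 * (1 + 1 / ?t) \<le> 8 / p" using p0 p1 by (simp add: field_simps)
  have "(\<Sum>x<n. dst (n*M) (evp x (Suc i))) \<le> (1 + ?t) * (1-p) * (\<Sum>x<n. dst (n*M) (evp x i)) + 4 * (1 + 1 / ?t)"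
    using Dstep[OF _ t, of i] Suc by simp
  also have "\<dots> \<le> (1 - p/2) * (16 / p^2) + 8 / p"
  proof -
    have "(1 - p/2) * (\<Sum>x<n. dst (n*M) (evp x i)) \<le> (1 - p/2) * (16 / p^2)"
      using Suc p1 by (intro mult_left_mono) auto
    moreover have "(1 + ?t) * (1-p) * (\<Sum>x<n. dst (n*M) (evp x i)) = (1 - p/2) * (\<Sum>x<n. dst (n*M) (evp x i))"
      by (simp only: e1)
    ultimately show ?thesis using e2 by linarith
  qed
  also have "\<dots> = 16 / p^2" using p0 by (simp add: field_simps power2_eq_square)
  finally show ?case .
qed

lemma succ_t:
  assumes E: "povm (n*M) n E" and t: "t > 0"
  shows "(\<Sum>x<n. Re (mtr (E x * round_state p n M R x))) \<le> (1+t) + (1 + 1/t) * (\<Sum>x<n. dst (n*M) (evp x (rk R)))"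
proof -
  let ?k = "rk R"
  have one: "Re (mtr (E x * round_state p n M R x)) \<le> (1+t) * (\<Sum>w\<leftarrow>evs ?k. Re (bf (n*M) (E x) w w)) + (1 + 1/t) * dst (n*M) (evp x ?k)"
    if x: "x < n" for x
  proof -
    have Ec: "E x \<in> carrier_mat (n*M) (n*M)" using E x by (auto simp: povm_def psd_def)
    have Ep: "psd (n*M) (E x)" using E x by (auto simp: povm_def)
    have "Re (mtr (E x * round_state p n M R x)) = (\<Sum>q\<leftarrow>evp x ?k. Re (bf (n*M) (E x) (fst q) (fst q)))"
      by (simp add: round_state_def evolve_evp mtr_E_stm[OF Ec] sl_re o_def)
    also have "\<dots> \<le> (\<Sum>q\<leftarrow>evp x ?k. (1+t) * Re (bf (n*M) (E x) (snd q) (snd q)) + (1 + 1/t) * nrm (n*M) (\<lambda>i. fst q i - snd q i))"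
    proof (rule sl_mono)
      fix q :: "(nat \<Rightarrow> complex) \<times> (nat \<Rightarrow> complex)"
      have f: "fst q = (\<lambda>i. snd q i + (fst q i - snd q i))" by auto
      have "Re (bf (n*M) (E x) (fst q) (fst q)) \<le> (1+t) * Re (bf (n*M) (E x) (snd q) (snd q)) + (1 + 1/t) * Re (bf (n*M) (E x) (\<lambda>i. fst q i - snd q i) (\<lambda>i. fst q i - snd q i))"
        by (subst (1 2) f) (rule bf_split[OF Ep t])
      also have "\<dots> \<le> (1+t) * Re (bf (n*M) (E x) (snd q) (snd q)) + (1 + 1/t) * nrm (n*M) (\<lambda>i. fst q i - snd q i)"
        using povm_le[OF E x] t by (intro add_mono mult_left_mono) auto
      finally show "Re (bf (n*M) (E x) (fst q) (fst q)) \<le> (1+t) * Re (bf (n*M) (E x) (snd q) (snd q)) + (1 + 1/t) * nrm (n*M) (\<lambda>i. fst q i - snd q i)" .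
    qed
    also have "\<dots> = (1+t) * (\<Sum>w\<leftarrow>map snd (evp x ?k). Re (bf (n*M) (E x) w w)) + (1 + 1/t) * dst (n*M) (evp x ?k)"
      by (simp add: sl_add sl_distl dst_def o_def)
    finally show ?thesis by (simp add: snd_evp)
  qed
  have "(\<Sum>x<n. Re (mtr (E x * round_state p n M R x))) \<le> (\<Sum>x<n. (1+t) * (\<Sum>w\<leftarrow>evs ?k. Re (bf (n*M) (E x) w w)) + (1 + 1/t) * dst (n*M) (evp x ?k))"
    by (rule sum_mono) (rule one, simp)
  also have "\<dots> = (1+t) * (\<Sum>w\<leftarrow>evs ?k. \<Sum>x<n. Re (bf (n*M) (E x) w w)) + (1 + 1/t) * (\<Sum>x<n. dst (n*M) (evp x ?k))"
    by (simp add: sum.distrib sum_distrib_left sl_sum)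
  also have "(\<Sum>w\<leftarrow>evs ?k. \<Sum>x<n. Re (bf (n*M) (E x) w w)) = 1"
    using nrm_evs[of ?k] by (simp add: povm_sum[OF E])
  finally show ?thesis by simp
qed

lemma succ_lin:
  assumes E: "povm (n*M) n E"
  shows "(\<Sum>x<n. Re (mtr (E x * round_state p n M R x))) \<le> 1 + 8 * rk R / p"
proof (cases "rk R = 0")
  case True
  let ?S = "(\<Sum>x<n. Re (mtr (E x * round_state p n M R x)))"
  have D: "(\<Sum>x<n. dst (n*M) (evp x (rk R))) \<le> 0" using Dlin[of "rk R"] True by simp
  have "?S \<le> 1 + e" if e: "e > 0" for e
  proof -
    have "?S \<le> (1+e) + (1 + 1/e) * (\<Sum>x<n. dst (n*M) (evp x (rk R)))" by (rule succ_t[OF E e])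
    also have "(1 + 1/e) * (\<Sum>x<n. dst (n*M) (evp x (rk R))) \<le> 0"
      using D e by (simp add: mult_nonneg_nonpos)
    finally show ?thesis by simp
  qed
  then have "?S \<le> 1" by (rule field_le_epsilon)
  then show ?thesis using True by simp
next
  case False
  let ?D = "4 * real (rk R) / p"
  let ?s = "sqrt ?D"
  have D4: "?D \<ge> 4" using False p0 p1 by (simp add: field_simps)
  have s2: "?s \<ge> 2" using D4 real_sqrt_le_mono[of 4 ?D] by simp
  have ss: "?s * ?s = ?D" using D4 by (simp only: real_sqrt_mult_self)
  have "(\<Sum>x<n. Re (mtr (E x * round_state p n M R x))) \<le> (1 + ?s) + (1 + 1/?s) * (\<Sum>x<n. dst (n*M) (evp x (rk R)))"
    using s2 D4 by (intro succ_t[OF E]) auto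
  also have "\<dots> \<le> (1 + ?s) + (1 + 1/?s) * ?D"
  proof -
    have "0 \<le> 1/?s" using D4 by simp
    then have "0 \<le> 1 + 1/?s" by linarith
    then show ?thesis using Dlin[of "rk R"] by (intro add_left_mono mult_left_mono) auto
  qed
  also have "\<dots> = 1 + 2 * ?s + ?D"
  proof -
    define s where "s = ?s"
    define D where "D = ?D"
    have "s * s = D" "s \<ge> 2" using ss s2 by (simp_all add: s_def D_def)
    then have "(1 + s) + (1 + 1/s) * D = 1 + 2 * s + D" by (simp add: field_simps)
    then show ?thesis by (simp add: s_def D_def)
  qed
  also have "\<dots> \<le> 1 + 2 * ?D"
  proof -
    have "2 * ?s \<le> ?s * ?s" using s2 D4 by (intro mult_right_mono) auto
    then show ?thesis using ss by linarith
  qed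
  also have "\<dots> = 1 + 8 * rk R / p" by simp
  finally show ?thesis .
qed

lemma succ_sat:
  assumes E: "povm (n*M) n E"
  shows "(\<Sum>x<n. Re (mtr (E x * round_state p n M R x))) \<le> (1 + 4/p)^2"
proof -
  let ?s = "4 / p"
  have s: "?s > 0" using p0 by simp
  have "(\<Sum>x<n. Re (mtr (E x * round_state p n M R x))) \<le> (1 + ?s) + (1 + 1/?s) * (\<Sum>x<n. dst (n*M) (evp x (rk R)))"
    by (rule succ_t[OF E s])
  also have "\<dots> \<le> (1 + ?s) + (1 + 1/?s) * (16 / p^2)"
    using Dsat[of "rk R"] s by (intro add_left_mono mult_left_mono) auto
  also have "\<dots> = (1 + 4/p)^2" using p0 by (simp add: field_simps power2_eq_square)
  finally show ?thesis .
qed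

end



definition herm :: "nat \<Rightarrow> cmat \<Rightarrow> bool" where
  "herm d A \<longleftrightarrow> (\<forall>i<d. \<forall>j<d. A $$ (i,j) = cnj (A $$ (j,i)))"

lemma herm_D: "herm d A \<Longrightarrow> i < d \<Longrightarrow> j < d \<Longrightarrow> A $$ (i,j) = cnj (A $$ (j,i))"
  unfolding herm_def by blast

lemma bf_herm_e: assumes "herm d A" shows "bf d A v u = cnj (bf d A u v)"
proof -
  have "cnj (bf d A u v) = (\<Sum>i<d. \<Sum>j<d. u i * cnj (A $$ (i,j)) * cnj (v j))"
    unfolding bf_def by (simp add: cnj_sum)
  also have "\<dots> = (\<Sum>j<d. \<Sum>i<d. u i * cnj (A $$ (i,j)) * cnj (v j))" by (rule sum.swap)
  also have "\<dots> = bf d A v u" unfolding bf_def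
  proof (intro sum.cong refl)
    fix j i assume "j \<in> {..<d}" "i \<in> {..<d}"
    then have "cnj (A $$ (i,j)) = A $$ (j,i)" using herm_D[OF assms, of j i] by simp
    then show "u i * cnj (A $$ (i,j)) * cnj (v j) = cnj (v j) * A $$ (j,i) * u i" by (simp add: mult_ac)
  qed
  finally show ?thesis by simp
qed

lemma bf_ev_l: "c < d \<Longrightarrow> bf d A (ev 1 c) u = (\<Sum>j<d. A $$ (c,j) * u j)"
proof -
  assume c: "c < d"
  have "bf d A (ev 1 c) u = (\<Sum>i<d. if i = c then (\<Sum>j<d. A $$ (c,j) * u j) else 0)"
    unfolding bf_def ev_def by (intro sum.cong refl) auto
  then show ?thesis using c by simp
qed

lemma bf_ev_r: "c < d \<Longrightarrow> bf d A u (ev 1 c) = (\<Sum>i<d. cnj (u i) * A $$ (i,c))"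
proof -
  assume c: "c < d"
  have "bf d A u (ev 1 c) = (\<Sum>i<d. \<Sum>j<d. if j = c then cnj (u i) * A $$ (i,c) else 0)"
    unfolding bf_def ev_def by (intro sum.cong refl) auto
  then show ?thesis using c by simp
qed

lemma bf_ev: "i < d \<Longrightarrow> j < d \<Longrightarrow> bf d A (ev 1 i) (ev 1 j) = A $$ (i,j)"
proof -
  assume i: "i < d" and j: "j < d"
  have "bf d A (ev 1 i) (ev 1 j) = (\<Sum>k<d. cnj (ev 1 i k) * A $$ (k,j))" by (rule bf_ev_r[OF j])
  also have "\<dots> = (\<Sum>k<d. if k = i then A $$ (i,j) else 0)"
    unfolding ev_def by (intro sum.cong refl) auto
  finally show ?thesis using i by simp
qed

lemma nsq: "(complex_of_real (cmod a))^2 = a * cnj a"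
  by (metis complex_norm_square of_real_power)

lemma re_cnj_mult: "Re (cnj a * a) = (cmod a)^2"
  using cmod_power2[of a] by (simp add: power2_eq_square)

lemma zero_col:
  assumes H: "herm d A" and P: "\<And>u. 0 \<le> Re (bf d A u u)"
    and c: "c < d" and i: "i < d" and z: "A $$ (c,c) = 0"
  shows "A $$ (i,c) = 0"
proof (rule ccontr)
  let ?a = "A $$ (i,c)"
  assume a: "?a \<noteq> 0"
  then have ic: "i \<noteq> c" using z by auto
  have na: "(cmod ?a)^2 > 0" using a by simp
  define \<tau> where "\<tau> = (\<bar>Re (A $$ (i,i))\<bar> + 1) / (cmod ?a)^2"
  define \<beta> where "\<beta> = - complex_of_real \<tau> * cnj ?a"
  let ?u = "\<lambda>j. ev 1 i j + \<beta> * ev 1 c j"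
  have aci: "A $$ (c,i) = cnj ?a" using herm_D[OF H c i] .
  have e1: "bf d A ?u ?u = A $$ (i,i) + \<beta> * ?a + cnj \<beta> * cnj ?a + cnj \<beta> * \<beta> * A $$ (c,c)"
    using c i aci by (simp add: bf_add_l bf_add_r bf_scale_l bf_scale_r bf_ev algebra_simps)
  have ba: "\<beta> * ?a = - complex_of_real (\<tau> * (cmod ?a)^2)"
    by (simp add: \<beta>_def nsq mult_ac)
  have ba2: "cnj \<beta> * cnj ?a = - complex_of_real (\<tau> * (cmod ?a)^2)"
    using arg_cong[OF ba, of cnj] by simp
  have "bf d A ?u ?u = A $$ (i,i) - 2 * complex_of_real (\<tau> * (cmod ?a)^2)"
    using e1 ba ba2 z by simp
  then have "Re (bf d A ?u ?u) = Re (A $$ (i,i)) - 2 * \<tau> * (cmod ?a)^2"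
    by simp
  also have "\<dots> = Re (A $$ (i,i)) - 2 * (\<bar>Re (A $$ (i,i))\<bar> + 1)"
    using na by (simp add: \<tau>_def)
  also have "\<dots> < 0"
  proof -
    have "\<forall>x::real. x - 2 * (\<bar>x\<bar> + 1) < 0" by (auto simp: abs_if)
    then show ?thesis by blast
  qed
  finally show False using P[of ?u] by linarith
qed

lemma cs_piv:
  assumes H: "herm d A" and P: "\<And>u. 0 \<le> Re (bf d A u u)"
    and c: "c < d" and r: "Re (A $$ (c,c)) > 0" and rr: "Im (A $$ (c,c)) = 0"
  shows "(cmod (bf d A u (ev 1 c)))^2 \<le> Re (A $$ (c,c)) * Re (bf d A u u)"
proof -
  define b where "b = bf d A u (ev 1 c)"
  define r where "r = Re (A $$ (c,c))"
  have r0: "r > 0" using r by (simp add: r_def)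
  have acc: "A $$ (c,c) = complex_of_real r" using rr by (simp add: complex_eq_iff r_def)
  define \<beta> where "\<beta> = - cnj b / complex_of_real r"
  let ?w = "\<lambda>j. u j + \<beta> * ev 1 c j"
  have eu: "bf d A (ev 1 c) u = cnj b" unfolding b_def by (rule bf_herm_e[OF H])
  have e1: "bf d A ?w ?w = bf d A u u + \<beta> * b + cnj \<beta> * cnj b + cnj \<beta> * \<beta> * A $$ (c,c)"
    using c eu by (simp add: bf_add_l bf_add_r bf_scale_l bf_scale_r bf_ev algebra_simps b_def)
  define X where "X = (cmod b)^2 / r"
  have bb: "\<beta> * b = - complex_of_real X"
    using r0 by (simp add: \<beta>_def X_def nsq field_simps)
  have bb2: "cnj \<beta> * cnj b = - complex_of_real X"
    using arg_cong[OF bb, of cnj] by simp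
  have nb: "cmod \<beta> = cmod b / r" using r0 by (simp add: \<beta>_def norm_divide)
  have "cnj \<beta> * \<beta> * A $$ (c,c) = complex_of_real ((cmod \<beta>)^2 * r)"
    by (simp add: nsq acc mult_ac)
  also have "(cmod \<beta>)^2 * r = X" unfolding nb X_def using r0 by (simp add: power2_eq_square field_simps)
  finally have bbb: "cnj \<beta> * \<beta> * A $$ (c,c) = complex_of_real X" .
  have "bf d A ?w ?w = bf d A u u - complex_of_real X"
    using e1 bb bb2 bbb by simp
  then have "Re (bf d A ?w ?w) = Re (bf d A u u) - X" by simp
  then have "0 \<le> Re (bf d A u u) - X" using P[of ?w] by simp
  then show ?thesis using r0 by (simp add: X_def b_def r_def field_simps)
qed

definition hp :: "nat \<Rightarrow> nat \<Rightarrow> cmat \<Rightarrow> bool" where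
  "hp d c A \<longleftrightarrow> A \<in> carrier_mat d d \<and> herm d A \<and> (\<forall>u. 0 \<le> Re (bf d A u u)) \<and>
     (\<forall>i<d. \<forall>j<d. (i < c \<or> j < c) \<longrightarrow> A $$ (i,j) = 0)"

lemma stm_nil: "stm d [] = 0\<^sub>m d d"
  by (rule eq_matI) (auto simp: stm_idx)

lemma fact_ind: "d - c = k \<Longrightarrow> hp d c A \<Longrightarrow> \<exists>L. stm d L = A"
proof (induct k arbitrary: c A)
  case 0
  then have "A = stm d []"
    by (intro eq_matI) (auto simp: hp_def stm_idx)
  then show ?case by blast
next
  case (Suc k)
  then have c: "c < d" by simp
  have Ac: "A \<in> carrier_mat d d" and H: "herm d A" and P: "\<And>u. 0 \<le> Re (bf d A u u)"
    and Z: "\<And>i j. i < d \<Longrightarrow> j < d \<Longrightarrow> i < c \<or> j < c \<Longrightarrow> A $$ (i,j) = 0"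
    using Suc.prems by (auto simp: hp_def)
  show ?case
  proof (cases "A $$ (c,c) = 0")
    case True
    have col: "A $$ (i,c) = 0" if "i < d" for i using zero_col[OF H P c that True] .
    have row: "A $$ (c,i) = 0" if "i < d" for i using col[OF that] herm_D[OF H c that] by simp
    have "hp d (Suc c) A"
      unfolding hp_def using Ac H P Z col row
      by (auto simp: less_Suc_eq)
    then show ?thesis using Suc.hyps[of "Suc c" A] Suc.prems by simp
  next
    case False
    define r where "r = Re (A $$ (c,c))"
    have rr: "Im (A $$ (c,c)) = 0"
    proof -
      have "A $$ (c,c) = cnj (A $$ (c,c))" using herm_D[OF H c c] .
      then have "Im (A $$ (c,c)) = - Im (A $$ (c,c))" by (metis complex_cnj_cancel_iff cnj.simps(2) complex.sel(2))
      then show ?thesis by simp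
    qed
    have acc: "A $$ (c,c) = complex_of_real r" using rr by (simp add: complex_eq_iff r_def)
    have r0: "r \<ge> 0" using P[of "ev 1 c"] c by (simp add: bf_ev r_def)
    have r: "r > 0" using r0 False acc by (cases "r = 0") auto
    have rpos: "Re (A $$ (c,c)) > 0" using r by (simp add: r_def)
    define s where "s = sqrt r"
    have s: "s > 0" "s * s = r" using r by (auto simp: s_def)
    define v where "v = (\<lambda>i. A $$ (i,c) / complex_of_real s)"
    define A' where "A' = mat d d (\<lambda>(i,j). A $$ (i,j) - v i * cnj (v j))"
    have vc: "v c = complex_of_real s"
    proof -
      have "r / s = s" using s by (simp add: field_simps)
      then show ?thesis by (simp add: v_def acc flip: of_real_divide)
    qed
    have vz: "v i = 0" if "i < c" for i using Z[of i c] that c by (simp add: v_def)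
    have herm': "herm d A'" unfolding herm_def
    proof (intro allI impI)
      fix i j assume "i < d" "j < d"
      then show "A' $$ (i,j) = cnj (A' $$ (j,i))" using herm_D[OF H, of i j] by (simp add: A'_def)
    qed
    have A'c: "A' \<in> carrier_mat d d" by (simp add: A'_def)
    have bfA': "bf d A' u u = bf d A u u - (\<Sum>i<d. cnj (u i) * v i) * cnj (\<Sum>i<d. cnj (u i) * v i)" for u
      unfolding bf_def A'_def
      by (simp add: sum_subtractf algebra_simps cnj_sum sum_distrib_left sum_distrib_right)
    have psd': "0 \<le> Re (bf d A' u u)" for u
    proof -
      let ?g = "\<Sum>i<d. cnj (u i) * v i"
      have g: "?g = bf d A u (ev 1 c) / complex_of_real s"
        using c by (simp add: bf_ev_r v_def sum_divide_distrib)
      have "(cmod ?g)^2 = (cmod (bf d A u (ev 1 c)))^2 / r"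
        unfolding g using s by (simp add: norm_divide power_divide power2_eq_square)
      also have "\<dots> \<le> Re (bf d A u u)"
        using cs_piv[OF H P c rpos rr, of u] r by (simp add: field_simps r_def)
      finally have "(cmod ?g)^2 \<le> Re (bf d A u u)" .
      moreover have "Re (?g * cnj ?g) = (cmod ?g)^2" using re_cnj_mult[of ?g] by (simp add: mult.commute)
      ultimately show ?thesis by (simp add: bfA')
    qed
    have z': "A' $$ (i,j) = 0" if "i < d" "j < d" "i < Suc c \<or> j < Suc c" for i j
    proof -
      have cases: "i < c \<or> j < c \<or> i = c \<or> j = c" using that(3) by auto
      show ?thesis
      proof (cases "i < c \<or> j < c")
        case True then show ?thesis using that Z vz by (auto simp: A'_def)
      next
        case F: False
        then have ij: "i = c \<or> j = c" using cases by auto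
        have "A $$ (c,j) = v c * cnj (v j)" if "j < d" for j
          using vc s herm_D[OF H c that] that c by (simp add: v_def)
        moreover have "A $$ (i,c) = v i * cnj (v c)" if "i < d" for i
          using vc s that by (simp add: v_def)
        ultimately show ?thesis using ij that by (auto simp: A'_def)
      qed
    qed
    have hpA': "hp d (Suc c) A'" unfolding hp_def using A'c herm' psd' z' by auto
    have dk: "d - Suc c = k" using Suc.prems(1) by simp
    obtain L where L: "stm d L = A'" using Suc.hyps[OF dk hpA'] by blast
    have "stm d (v # L) = A"
    proof (rule eq_matI)
      fix i j assume "i < dim_row A" "j < dim_col A"
      then have i: "i < d" and j: "j < d" using Ac by auto
      have "stm d (v # L) $$ (i,j) = v i * cnj (v j) + stm d L $$ (i,j)" using i j by (simp add: stm_idx)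
      also have "\<dots> = A $$ (i,j)" using i j by (simp add: L A'_def)
      finally show "stm d (v # L) $$ (i,j) = A $$ (i,j)" .
    qed (use Ac in auto)
    then show ?thesis by blast
  qed
qed

lemma density_fact:
  assumes "density d \<rho>"
  shows "\<exists>L. stm d L = \<rho>"
proof -
  have p: "psd d \<rho>" using assms by (simp add: density_def)
  have h: "herm d \<rho>" unfolding herm_def using psd_herm[OF p] by blast
  have "hp d 0 \<rho>" unfolding hp_def
    using h psd_carrier[OF p] psd_bf_nonneg[OF p] by blast
  then show ?thesis using fact_ind[of d 0 d \<rho>] by simp
qed



lemma round_bound:
  assumes p0: "0 < p" and p1: "p < 1" and n: "0 < n" and M: "1 \<le> M" and V: "valid_round n M R"
  shows "round_success p n M R \<le> (1 + 8 * rk R / p) / n \<and> round_success p n M R \<le> (1 + 4/p)^2 / n"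
proof -
  let ?d = "n*M"
  have dens: "density ?d (rinit R)" and cp: "\<And>i. i \<in> {1..rk R} \<Longrightarrow> cptp ?d (rT R i) \<and> cptp ?d (rT' R i)"
    and pv: "povm ?d n (rE R)"
    using V by (auto simp: valid_round_def)
  obtain L0 where L0: "stm ?d L0 = rinit R" using density_fact[OF dens] by blast
  have ex1: "\<forall>i. \<exists>mK. i \<in> {1..rk R} \<longrightarrow> kraus ?d (fst mK) (snd mK) \<and>
      (\<forall>\<rho>\<in>carrier_mat ?d ?d. rT R i \<rho> = msum ?d (fst mK) (\<lambda>a. snd mK a * \<rho> * madj (snd mK a)))"
  proof
    fix i
    show "\<exists>mK. i \<in> {1..rk R} \<longrightarrow> kraus ?d (fst mK) (snd mK) \<and>
      (\<forall>\<rho>\<in>carrier_mat ?d ?d. rT R i \<rho> = msum ?d (fst mK) (\<lambda>a. snd mK a * \<rho> * madj (snd mK a)))"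
    proof (cases "i \<in> {1..rk R}")
      case True
      then obtain m K where "(\<forall>i<m. K i \<in> carrier_mat ?d ?d) \<and> msum ?d m (\<lambda>i. madj (K i) * K i) = 1\<^sub>m ?d \<and>
        (\<forall>\<rho>\<in>carrier_mat ?d ?d. rT R i \<rho> = msum ?d m (\<lambda>i. K i * \<rho> * madj (K i)))"
        using cp[OF True] unfolding cptp_def by blast
      then show ?thesis by (intro exI[of _ "(m,K)"]) (simp add: kraus_def)
    qed auto
  qed
  obtain f where f: "\<forall>i. i \<in> {1..rk R} \<longrightarrow> kraus ?d (fst (f i)) (snd (f i)) \<and>
      (\<forall>\<rho>\<in>carrier_mat ?d ?d. rT R i \<rho> = msum ?d (fst (f i)) (\<lambda>a. snd (f i) a * \<rho> * madj (snd (f i) a)))"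
    using choice[OF ex1] by blast
  have ex2: "\<forall>i. \<exists>mK. i \<in> {1..rk R} \<longrightarrow> kraus ?d (fst mK) (snd mK) \<and>
      (\<forall>\<rho>\<in>carrier_mat ?d ?d. rT' R i \<rho> = msum ?d (fst mK) (\<lambda>a. snd mK a * \<rho> * madj (snd mK a)))"
  proof
    fix i
    show "\<exists>mK. i \<in> {1..rk R} \<longrightarrow> kraus ?d (fst mK) (snd mK) \<and>
      (\<forall>\<rho>\<in>carrier_mat ?d ?d. rT' R i \<rho> = msum ?d (fst mK) (\<lambda>a. snd mK a * \<rho> * madj (snd mK a)))"
    proof (cases "i \<in> {1..rk R}")
      case True
      then obtain m K where "(\<forall>i<m. K i \<in> carrier_mat ?d ?d) \<and> msum ?d m (\<lambda>i. madj (K i) * K i) = 1\<^sub>m ?d \<and>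
        (\<forall>\<rho>\<in>carrier_mat ?d ?d. rT' R i \<rho> = msum ?d m (\<lambda>i. K i * \<rho> * madj (K i)))"
        using cp[OF True] unfolding cptp_def by blast
      then show ?thesis by (intro exI[of _ "(m,K)"]) (simp add: kraus_def)
    qed auto
  qed
  obtain g where g: "\<forall>i. i \<in> {1..rk R} \<longrightarrow> kraus ?d (fst (g i)) (snd (g i)) \<and>
      (\<forall>\<rho>\<in>carrier_mat ?d ?d. rT' R i \<rho> = msum ?d (fst (g i)) (\<lambda>a. snd (g i) a * \<rho> * madj (snd (g i) a)))"
    using choice[OF ex2] by blast
  have tr0: "mtr (rinit R) = 1" using dens by (simp add: density_def)
  have nM: "0 < n * M" using n M by simp
  interpret rc: rctx p n M R "\<lambda>i. fst (f i)" "\<lambda>i. snd (f i)" "\<lambda>i. fst (g i)" "\<lambda>i. snd (g i)" L0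
    by (unfold_locales) (use p0 p1 nM f g L0 tr0 in auto)
  have S1: "(\<Sum>x<n. Re (mtr (rE R x * round_state p n M R x))) \<le> 1 + 8 * rk R / p"
    by (rule rc.succ_lin[OF pv])
  have S2: "(\<Sum>x<n. Re (mtr (rE R x * round_state p n M R x))) \<le> (1 + 4/p)^2"
    by (rule rc.succ_sat[OF pv])
  show ?thesis
    using S1 S2 n unfolding round_success_def by (auto simp: divide_right_mono field_simps)
qed



lemma lnb:
  fixes x xm :: real
  assumes "x \<le> xm" "xm < 1" "0 \<le> xm"
  shows "- ln (1 - x) \<le> (1 / (1 - xm)) * max 0 x"
proof -
  have x1: "1 - x > 0" using assms by simp
  have "- ln (1 - x) = ln (1 / (1 - x))" using x1 by (simp add: ln_div)
  also have "\<dots> \<le> 1 / (1 - x) - 1" using x1 by (intro ln_le_minus_one) simp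
  also have "\<dots> = x / (1 - x)" using x1 by (simp add: field_simps)
  also have "\<dots> \<le> (1 / (1 - xm)) * max 0 x"
  proof (cases "x \<le> 0")
    case True
    then have "x / (1 - x) \<le> 0" using x1 by (simp add: divide_nonpos_pos)
    then show ?thesis using True by simp
  next
    case False
    then have "x / (1 - x) \<le> x / (1 - xm)" using assms x1 by (intro divide_left_mono) auto
    then show ?thesis using False by simp
  qed
  finally show ?thesis .
qed

lemma queries_ge: "real (queries A) = (\<Sum>g\<le>arounds A. real (rk (around A g)) + 1)"
  by (simp add: queries_def add.commute)

theorem theorem5:
  fixes p \<epsilon> :: real
  assumes "0 < p" "p < 1" "0 < \<epsilon>" "\<epsilon> < 1"
  shows "\<exists>C :: nat \<Rightarrow> real. C \<longlonglongrightarrow> 1 \<and>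
    (\<forall>N A. valid_alg N A \<and> failure_prob p N A \<le> \<epsilon> \<longrightarrow>
       real N / (1 + 8 * C N / (p * ln (1 / \<epsilon>))) \<le> real (queries A))"
proof -
  note p0 = assms(1) and p1 = assms(2) and e0 = assms(3) and e1 = assms(4)
  define L where "L = ln (1 / \<epsilon>)"
  have L: "L > 0" unfolding L_def using e0 e1 by (intro ln_gt_zero) (simp add: field_simps)
  have Le: "ln \<epsilon> = - L" unfolding L_def using e0 by (simp add: ln_div)
  define a where "a = 8 / p"
  have a1: "a \<ge> 1" using p0 p1 by (simp add: a_def field_simps)
  define B where "B = (1 + 4/p)^2"
  have B0: "B > 0"
  proof -
    have "0 < 4/p" using p0 by simp
    then have "0 < 1 + 4/p" by linarith
    then show ?thesis by (simp add: B_def)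
  qed
  define xm where "xm = (\<lambda>N::nat. B * (L + a) / (a * real N))"
  define C where "C = (\<lambda>N. if xm N < 1 then 1 / (1 - xm N) else real N * p * L / 8)"
  have Cdiv: "8 * C N / (p * L) = a * C N / L" for N using p0 by (simp add: a_def)
  show ?thesis
  proof (intro exI[of _ C] conjI allI impI)
    have xe: "xm = (\<lambda>N. (B * (L + a) / a) * inverse (real N))"
      by (rule ext) (simp add: xm_def divide_inverse mult_ac)
    have xm0: "xm \<longlonglongrightarrow> 0"
      unfolding xe using tendsto_mult[OF tendsto_const lim_inverse_n, of "B * (L + a) / a"] by simp
    have h: "(\<lambda>N. 1 / (1 - xm N)) \<longlonglongrightarrow> 1 / (1 - 0)"
      by (intro tendsto_intros xm0) auto
    have ev: "eventually (\<lambda>N. xm N < 1) sequentially" using order_tendstoD(2)[OF xm0, of 1] by simp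
    have "eventually (\<lambda>N. C N = 1 / (1 - xm N)) sequentially"
      using ev by eventually_elim (simp add: C_def)
    then show "C \<longlonglongrightarrow> 1" using h tendsto_cong by fastforce
  next
    fix N A
    assume asm: "valid_alg N A \<and> failure_prob p N A \<le> \<epsilon>"
    let ?r = "arounds A" and ?M = "aM A"
    let ?k = "\<lambda>g. rk (around A g)"
    let ?ps = "\<lambda>g. round_success p (N - g) ?M (around A g)"
    let ?q = "real (queries A)"
    have rN: "?r < N" and M1: "1 \<le> ?M" and vr: "\<And>g. g \<le> ?r \<Longrightarrow> valid_round (N - g) ?M (around A g)"
      using asm by (auto simp: valid_alg_def)
    have F: "(\<Prod>g\<le>?r. 1 - ?ps g) \<le> \<epsilon>" using asm by (simp add: failure_prob_def)
    have q: "?q = (\<Sum>g\<le>?r. real (?k g) + 1)" by (rule queries_ge)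
    have qr: "?q \<ge> real ?r + 1"
    proof -
      have "(\<Sum>g\<le>?r. (1::real)) \<le> (\<Sum>g\<le>?r. real (?k g) + 1)" by (intro sum_mono) auto
      then show ?thesis using q by simp
    qed
    have N1: "real N \<ge> 1" using rN by simp
    have bnd: "?ps g \<le> (1 + a * ?k g) / real (N - g) \<and> ?ps g \<le> B / real (N - g)" if g: "g \<le> ?r" for g
    proof -
      have "0 < N - g" using g rN by simp
      then show ?thesis using round_bound[OF p0 p1 _ M1 vr[OF g]] by (simp add: a_def B_def mult.commute)
    qed
    show "real N / (1 + 8 * C N / (p * ln (1 / \<epsilon>))) \<le> ?q"
    proof (cases "xm N < 1")
      case False
      then have "8 * C N / (p * ln (1 / \<epsilon>)) = real N"
        using p0 L by (simp add: C_def L_def[symmetric])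
      then have "real N / (1 + 8 * C N / (p * ln (1 / \<epsilon>))) = real N / (1 + real N)" by simp
      also have "\<dots> \<le> 1" by simp
      also have "\<dots> \<le> ?q" using qr by simp
      finally show ?thesis .
    next
      case True
      have xpos: "xm N > 0" using B0 L a1 N1 by (simp add: xm_def)
      have CN: "C N = 1 / (1 - xm N)" using True by (simp add: C_def)
      have C1: "C N \<ge> 1"
      proof -
        have "0 < 1 - xm N" "1 - xm N \<le> 1" using True xpos by auto
        then have "1 \<le> 1 / (1 - xm N)" by (simp add: le_divide_eq)
        then show ?thesis using CN by simp
      qed
      have lhs: "real N / (1 + 8 * C N / (p * ln (1 / \<epsilon>))) = real N * L / (L + a * C N)"
      proof -
        have e: "8 * C N / (p * ln (1 / \<epsilon>)) = a * C N / L" using Cdiv[of N] by (simp add: L_def)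
        have "0 < L + a * C N" using L a1 C1 by (simp add: add_pos_pos)
        then show ?thesis unfolding e using L by (simp add: field_simps)
      qed
      show ?thesis
      proof (cases "?q \<ge> real N * L / (L + a)")
        case True
        have "real N * L / (L + a * C N) \<le> real N * L / (L + a)"
        proof (rule divide_left_mono)
          show "L + a \<le> L + a * C N" using a1 C1 by (simp add: mult_left_mono[of 1 "C N" a, simplified])
          show "0 \<le> real N * L" using L by simp
          have "0 < L + a * C N" "0 < L + a" using L a1 C1 by (auto intro: add_pos_pos)
          then show "0 < (L + a * C N) * (L + a)" by simp
        qed
        then show ?thesis using True lhs by simp
      next
        case qs: False
        have D: "real N - ?q > real N * a / (L + a)"
        proof -
          have "?q < real N * L / (L + a)" using qs by simp
          moreover have "real N * L / (L + a) = real N - real N * a / (L + a)"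
            using L a1 by (simp add: field_simps)
          ultimately show ?thesis by simp
        qed
        have D0: "real N * a / (L + a) > 0" using L a1 N1 by simp
        have Ng: "real (N - g) > real N - ?q" if "g \<le> ?r" for g
          using that rN qr by (simp add: of_nat_diff)
        have psx: "?ps g \<le> xm N" if g: "g \<le> ?r" for g
        proof -
          have "?ps g \<le> B / real (N - g)" using bnd[OF g] by simp
          also have "\<dots> \<le> B / (real N * a / (L + a))"
          proof (rule divide_left_mono)
            show "real N * a / (L + a) \<le> real (N - g)" using Ng[OF g] D by linarith
            show "0 \<le> B" using B0 by simp
            have "0 < real (N - g)" using Ng[OF g] D D0 by linarith
            then show "0 < real (N - g) * (real N * a / (L + a))" using D0 by (rule mult_pos_pos)
          qed
          also have "\<dots> = xm N" using L a1 by (simp add: xm_def field_simps)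
          finally show ?thesis .
        qed
        have psk: "max 0 (?ps g) \<le> (1 + a * ?k g) / (real N - ?q)" if g: "g \<le> ?r" for g
        proof -
          have "?ps g \<le> (1 + a * ?k g) / real (N - g)" using bnd[OF g] by simp
          also have "\<dots> \<le> (1 + a * ?k g) / (real N - ?q)"
          proof (rule divide_left_mono)
            show "real N - ?q \<le> real (N - g)" using Ng[OF g] by linarith
            show "0 \<le> 1 + a * ?k g" using a1 by simp
            have "0 < real (N - g)" "0 < real N - ?q" using Ng[OF g] D D0 by linarith+
            then show "0 < real (N - g) * (real N - ?q)" by (rule mult_pos_pos)
          qed
          finally show ?thesis using D D0 a1 by simp
        qed
        have fpos: "1 - ?ps g > 0" if "g \<le> ?r" for g using psx[OF that] True by simp
        have "ln (\<Prod>g\<le>?r. 1 - ?ps g) \<le> ln \<epsilon>"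
          using F fpos e0 by (intro ln_mono prod_pos) auto
        also have "ln (\<Prod>g\<le>?r. 1 - ?ps g) = (\<Sum>g\<le>?r. ln (1 - ?ps g))"
        proof (rule ln_prod)
          fix g assume "g \<in> {..?r}"
          then have "1 - ?ps g > 0" using fpos by simp
          then show "1 - ?ps g \<noteq> 0" by linarith
        qed simp
        finally have "L \<le> (\<Sum>g\<le>?r. - ln (1 - ?ps g))" using Le by (simp add: sum_negf)
        also have "\<dots> \<le> (\<Sum>g\<le>?r. C N * ((1 + a * ?k g) / (real N - ?q)))"
        proof (intro sum_mono)
          fix g assume "g \<in> {..?r}"
          then have g: "g \<le> ?r" by simp
          have "- ln (1 - ?ps g) \<le> (1 / (1 - xm N)) * max 0 (?ps g)"
            using psx[OF g] True xpos by (intro lnb) auto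
          also have "\<dots> \<le> C N * ((1 + a * ?k g) / (real N - ?q))"
            unfolding CN[symmetric] using psk[OF g] C1 by (intro mult_left_mono) auto
          finally show "- ln (1 - ?ps g) \<le> C N * ((1 + a * ?k g) / (real N - ?q))" .
        qed
        also have "\<dots> = C N / (real N - ?q) * (\<Sum>g\<le>?r. 1 + a * ?k g)"
          by (simp add: sum_distrib_left)
        also have "\<dots> \<le> C N / (real N - ?q) * (a * ?q)"
        proof -
          have "(\<Sum>g\<le>?r. 1 + a * ?k g) \<le> (\<Sum>g\<le>?r. a * (real (?k g) + 1))"
            using a1 by (intro sum_mono) (simp add: algebra_simps)
          also have "\<dots> = a * ?q" using q by (simp add: sum_distrib_left)
          finally show ?thesis using C1 D D0 by (intro mult_left_mono) auto
        qed
        finally have key: "L \<le> C N / (real N - ?q) * (a * ?q)" .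
        have "L * (real N - ?q) \<le> C N * a * ?q"
          using key D D0 by (simp add: field_simps)
        then have "real N * L \<le> ?q * (L + a * C N)" by (simp add: algebra_simps)
        moreover have "0 < L + a * C N" using L a1 C1 by (auto intro: add_pos_pos)
        ultimately have "real N * L / (L + a * C N) \<le> ?q"
          by (simp add: pos_divide_le_eq mult.commute)
        then show ?thesis using lhs by simp
      qed
    qed
  qed
qed


end
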